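(* Let $f,g:\mathbb R\to\mathbb R_{+\infty}$ be $\mathcal H$-convex with $\operatorname{dom} f\cap\operatorname{dom} g\ne\emptyset$. Then $\operatorname{cl}(\operatorname{supp} f+\operatorname{supp} g)$ is $\mathcal H$-convex, and $$\operatorname{supp}(f+g)=\operatorname{cl}(\operatorname{supp} f+\operatorname{supp} g).$$ Equivalently, $\operatorname{cl}(\operatorname{epi} f^*+\operatorname{epi} g^* )=\operatorname{epi}(f+g)^*$ in $\mathcal L\times\mathbb R$.
   Context: $X=\mathbb R$; $\mathbb R_{+\infty}=\mathbb R\cup\{+\infty\}$. For $a,b\in\mathbb R$, $\phi_a(x)=ax^2$, $\psi_{a,b}(x)=ax^2+b$; $\mathcal L=\{\phi_a:a\in\mathbb R\}$, $\mathcal H=\{\psi_{a,b}:a,b\in\mathbb R\}$, both with the pointwise convergence topology (under which $\phi_a\mapsto a$ and $\psi_{a,b}\mapsto(a,b)$ are homeomorphisms onto $\mathbb R$ and $\mathbb R^2$); $\mathcal L\times\mathbb R$ has the product topology; $\operatorname{cl}$ is closure. $\operatorname{dom} f=\{x:f(x)<+\infty\}$; $\operatorname{supp} f=\{h\in\mathcal H:h\le f\}$; $f$ is $\mathcal H$-convex if $f=\sup_{h\in H}h$ for some $H\subset\mathcal H$; a set $C\subset\mathcal H$ is $\mathcal H$-convex if for every $h_0\in\mathcal H\setminus C$ there is $x$ with $h_0(x)>\sup_{h\in C}h(x)$. $f^*(\phi_a)=\sup_x(ax^2-f(x))$ and $\operatorname{epi} f^*=\{(l,r)\in\mathcal L\times\mathbb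 R:f^*(l)\le r\}$. Sums of sets are Minkowski sums. *)

theory Defs
  imports "HOL-Analysis.Analysis"
begin

text \<open>Elements of H are psi_{a,b}(x) = a x^2 + b; we identify psi_{a,b} with the
parameter pair (a,b) :: real \<times> real (a homeomorphism for the pointwise topology).
Functions R -> R_{+\<infinity>} are modelled as real \<Rightarrow> ereal never taking the value -\<infinity>.\<close>

definition psi :: "real \<times> real \<Rightarrow> real \<Rightarrow> real" where
  "psi h x = fst h * x\<^sup>2 + snd h"

definition H_convex_fun :: "(real \<Rightarrow> ereal) \<Rightarrow> bool" where
  "H_convex_fun f \<longleftrightarrow> (\<exists>H :: (real \<times> real) set. f = (\<lambda>x. SUP h\<in>H. ereal (psi h x)))"

definition supp :: "(real \<Rightarrow> ereal) \<Rightarrow> (real \<times> real) set" where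
  "supp f = {h. \<forall>x. ereal (psi h x) \<le> f x}"

definition H_convex_set :: "(real \<times> real) set \<Rightarrow> bool" where
  "H_convex_set C \<longleftrightarrow>
     (\<forall>h0. h0 \<notin> C \<longrightarrow> (\<exists>x. ereal (psi h0 x) > (SUP h\<in>C. ereal (psi h x))))"

definition dom :: "(real \<Rightarrow> ereal) \<Rightarrow> real set" where
  "dom f = {x. f x < \<infinity>}"

definition msum :: "(real \<times> real) set \<Rightarrow> (real \<times> real) set \<Rightarrow> (real \<times> real) set" where
  "msum A B = {p + q | p q. p \<in> A \<and> q \<in> B}"

end

theory Submission
  imports Defs
begin

lemma psi_inner: "psi h x = inner (x^2, 1::real) h"
  by (cases h) (simp add: psi_def)

lemma psi_add: "psi (p+q) x = psi p x + psi q x"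
  by (simp add: psi_def algebra_simps)

lemma closed_convex_supp:
  assumes "\<forall>x. F x \<noteq> -\<infinity>"
  shows "closed (supp F) \<and> convex (supp F)"
proof -
  define S where "S x = (if F x = \<infinity> then UNIV else {h. inner (x^2, 1::real) h \<le> real_of_ereal (F x)})" for x
  have eq: "supp F = (\<Inter>x. S x)"
  proof -
    have "ereal (psi h x) \<le> F x \<longleftrightarrow> h \<in> S x" for h x
      using assms[rule_format, of x] by (cases "F x") (auto simp: S_def psi_inner)
    then show ?thesis unfolding supp_def by auto
  qed
  have "closed (S x)" "convex (S x)" for x
    by (auto simp: S_def closed_halfspace_le convex_halfspace_le)
  then show ?thesis unfolding eq by (auto intro!: convex_INT)
qed

lemma msum_eq: "msum A B = (\<Union>x\<in>A. \<Union>y\<in>B. {x+y})"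
  unfolding msum_def by blast

lemma sum_bound:
  fixes f g :: "real \<Rightarrow> ereal"
  assumes f: "f = (\<lambda>x. SUP h\<in>Hf. ereal (psi h x))" and g: "g = (\<lambda>x. SUP h\<in>Hg. ereal (psi h x))"
    and nf: "f x \<noteq> -\<infinity>" and ng: "g x \<noteq> -\<infinity>"
    and bd: "\<And>p q. p \<in> Hf \<Longrightarrow> q \<in> Hg \<Longrightarrow> psi p x + psi q x \<le> c"
  shows "f x + g x \<le> ereal c"
proof -
  have "Hf \<noteq> {}" using nf f by (auto simp: bot_ereal_def)
  then obtain p0 where p0: "p0 \<in> Hf" by auto
  have "g x \<le> ereal (c - psi p0 x)" unfolding g
  proof (rule SUP_least)
    fix q assume q: "q \<in> Hg"
    show "ereal (psi q x) \<le> ereal (c - psi p0 x)" using bd[OF p0 q] by simp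
  qed
  with ng obtain s where s: "g x = ereal s" by (cases "g x") auto
  have "f x \<le> ereal (c - s)" unfolding f
  proof (rule SUP_least)
    fix p assume p: "p \<in> Hf"
    have "g x \<le> ereal (c - psi p x)" unfolding g
    proof (rule SUP_least)
      fix q assume q: "q \<in> Hg"
      show "ereal (psi q x) \<le> ereal (c - psi p x)" using bd[OF p q] by simp
    qed
    then show "ereal (psi p x) \<le> ereal (c - s)" using s by auto
  qed
  with nf obtain r where r: "f x = ereal r" by (cases "f x") auto
  show ?thesis using \<open>f x \<le> ereal (c - s)\<close> r s by auto
qed

theorem mainTheorem14:
  fixes f g :: "real \<Rightarrow> ereal"
  assumes "\<forall>x. f x \<noteq> -\<infinity>" and "\<forall>x. g x \<noteq> -\<infinity>"
    and "H_convex_fun f" and "H_convex_fun g"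
    and "dom f \<inter> dom g \<noteq> {}"
  shows "H_convex_set (closure (msum (supp f) (supp g)))
       \<and> supp (\<lambda>x. f x + g x) = closure (msum (supp f) (supp g))"
proof -
  note nf = assms(1) and ng = assms(2)
  obtain Hf where Hf: "f = (\<lambda>x. SUP h\<in>Hf. ereal (psi h x))" using assms(3) H_convex_fun_def by auto
  obtain Hg where Hg: "g = (\<lambda>x. SUP h\<in>Hg. ereal (psi h x))" using assms(4) H_convex_fun_def by auto
  have Hfs: "Hf \<subseteq> supp f" unfolding supp_def Hf by (auto intro: SUP_upper)
  have Hgs: "Hg \<subseteq> supp g" unfolding supp_def Hg by (auto intro: SUP_upper)
  have "Hf \<noteq> {}" using nf Hf by (auto simp: bot_ereal_def)
  have "Hg \<noteq> {}" using ng Hg by (auto simp: bot_ereal_def)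
  define C where "C = closure (msum (supp f) (supp g))"
  define S where "S = supp (\<lambda>x. f x + g x)"
  have nfg: "\<forall>x. f x + g x \<noteq> -\<infinity>" using nf ng by auto
  have msS: "msum (supp f) (supp g) \<subseteq> S"
  proof
    fix h assume "h \<in> msum (supp f) (supp g)"
    then obtain p q where h: "h = p + q" "p \<in> supp f" "q \<in> supp g" unfolding msum_def by auto
    show "h \<in> S" unfolding S_def supp_def
    proof (intro CollectI allI)
      fix x
      have "ereal (psi h x) = ereal (psi p x) + ereal (psi q x)" using h by (simp add: psi_add)
      also have "\<dots> \<le> f x + g x" using h(2,3) unfolding supp_def by (intro add_mono) auto
      finally show "ereal (psi h x) \<le> f x + g x" .
    qed
  qed
  have "closed S" unfolding S_def using closed_convex_supp[OF nfg] by auto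
  hence CS: "C \<subseteq> S" unfolding C_def using msS closure_minimal by blast
  have SC: "S \<subseteq> C"
  proof
    fix h0 assume h0S: "h0 \<in> S"
    show "h0 \<in> C"
    proof (rule ccontr)
      assume "h0 \<notin> C"
      have "convex C" unfolding C_def msum_eq using closed_convex_supp nf ng
        by (intro convex_closure convex_sums) auto
      then obtain w k0 where wk: "inner w h0 < k0" "\<forall>h\<in>C. inner w h > k0"
        using separating_hyperplane_closed_point[of C h0] \<open>h0 \<notin> C\<close> unfolding C_def by auto
      define u where "u = - fst w"
      define v where "v = - snd w"
      define k where "k = - k0"
      have inn: "inner w h = - (u * fst h + v * snd h)" for h
        by (cases w, cases h) (simp add: u_def v_def)
      have h0k: "u * fst h0 + v * snd h0 > k" using wk(1) inn k_def by auto
      have mk: "u * fst h + v * snd h < k" if "h \<in> msum (supp f) (supp g)" for h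
      proof -
        have "h \<in> C" using that closure_subset[of "msum (supp f) (supp g)"] unfolding C_def by auto
        hence "k0 < inner w h" using wk(2) by auto
        then show ?thesis using inn[of h] k_def by linarith
      qed
      obtain p0 where p0: "p0 \<in> Hf" using \<open>Hf \<noteq> {}\<close> by auto
      obtain q0 where q0: "q0 \<in> Hg" using \<open>Hg \<noteq> {}\<close> by auto
      define m where "m = p0 + q0"
      have mm: "m \<in> msum (supp f) (supp g)" using p0 q0 Hfs Hgs unfolding m_def msum_def by blast
      have mms: "m - (s, r) \<in> msum (supp f) (supp g)" if "s \<ge> 0" "r \<ge> 0" for s r
      proof -
        have "p0 - (s, r) \<in> supp f"
          unfolding supp_def
        proof (intro CollectI allI)
          fix x
          have "psi (p0 - (s, r)) x \<le> psi p0 x" using that by (simp add: psi_def algebra_simps mult_nonneg_nonneg)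
          moreover have "ereal (psi p0 x) \<le> f x" using p0 Hfs unfolding supp_def by auto
          ultimately show "ereal (psi (p0 - (s, r)) x) \<le> f x" by (meson ereal_less_eq(3) order_trans)
        qed
        moreover have "m - (s, r) = (p0 - (s, r)) + q0" unfolding m_def by simp
        ultimately show ?thesis using q0 Hgs unfolding msum_def by blast
      qed
      define base where "base = u * fst m + v * snd m"
      have bk: "base < k" using mk[OF mm] base_def by simp
      have u0: "u \<ge> 0"
      proof (rule ccontr)
        assume "\<not> u \<ge> 0"
        define s where "s = (k - base) / (- u) + 1"
        have s0: "s \<ge> 0" using bk \<open>\<not> u \<ge> 0\<close> unfolding s_def by (simp add: field_simps)
        have "u * (fst m - s) + v * snd m = base - u * s" unfolding base_def by (simp add: algebra_simps)
        also have "\<dots> = k - u" using \<open>\<not> u \<ge> 0\<close> unfolding s_def by (simp add: field_simps)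
        finally have "u * fst (m - (s,0)) + v * snd (m - (s,0)) = k - u" by simp
        with mk[OF mms[OF s0 order_refl]] \<open>\<not> u \<ge> 0\<close> show False by simp
      qed
      have v0: "v \<ge> 0"
      proof (rule ccontr)
        assume "\<not> v \<ge> 0"
        define s where "s = (k - base) / (- v) + 1"
        have s0: "s \<ge> 0" using bk \<open>\<not> v \<ge> 0\<close> unfolding s_def by (simp add: field_simps)
        have "u * fst m + v * (snd m - s) = base - v * s" unfolding base_def by (simp add: algebra_simps)
        also have "\<dots> = k - v" using \<open>\<not> v \<ge> 0\<close> unfolding s_def by (simp add: field_simps)
        finally have "u * fst (m - (0,s)) + v * snd (m - (0,s)) = k - v" by simp
        with mk[OF mms[OF order_refl s0]] \<open>\<not> v \<ge> 0\<close> show False by simp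
      qed
      obtain x0 where x0: "f x0 < \<infinity>" "g x0 < \<infinity>" using assms(5) unfolding dom_def by auto
      obtain r1 where r1: "f x0 = ereal r1" using x0(1) nf by (cases "f x0") auto
      obtain r2 where r2: "g x0 = ereal r2" using x0(2) ng by (cases "g x0") auto
      define M where "M = r1 + r2"
      have psiM: "psi h x0 \<le> M" if "h \<in> S" for h
      proof -
        have "ereal (psi h x0) \<le> f x0 + g x0" using that unfolding S_def supp_def by auto
        then show ?thesis using r1 r2 M_def by simp
      qed
      define \<delta> where "\<delta> = u * fst h0 + v * snd h0 - k"
      define D where "D = M - psi h0 x0"
      have d0: "\<delta> > 0" using h0k \<delta>_def by simp
      have D0: "D \<ge> 0" using psiM[OF h0S] D_def by simp
      define l where "l = \<delta> / (D + 1)"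
      have l0: "l > 0" using d0 D0 l_def by simp
      have lD: "l * D < \<delta>"
      proof -
        have "l * D = \<delta> * (D / (D+1))" unfolding l_def by simp
        also have "\<dots> < \<delta> * 1" using d0 D0 by (intro mult_strict_left_mono) auto
        finally show ?thesis by simp
      qed
      define u' where "u' = u + l * x0^2"
      define v' where "v' = v + l"
      define k' where "k' = k + l * M"
      have u'0: "u' \<ge> 0" using u0 l0 u'_def by simp
      have v'0: "v' > 0" using v0 l0 v'_def by simp
      have lin: "u' * fst h + v' * snd h = (u * fst h + v * snd h) + l * psi h x0" for h
        unfolding u'_def v'_def psi_def by (simp add: algebra_simps)
      have mk': "u' * fst h + v' * snd h \<le> k'" if "h \<in> msum (supp f) (supp g)" for h
      proof -
        have "psi h x0 \<le> M" using psiM msS that by blast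
        hence "l * psi h x0 \<le> l * M" using l0 by simp
        then show ?thesis using lin[of h] mk[OF that] k'_def by linarith
      qed
      have h0k': "u' * fst h0 + v' * snd h0 > k'"
        using lin[of h0] lD \<delta>_def D_def k'_def by (simp add: algebra_simps)
      define t where "t = u' / v'"
      define x where "x = sqrt t"
      have t0: "t \<ge> 0" using u'0 v'0 t_def by simp
      have x2: "x^2 = t" using t0 x_def by simp
      have psix: "psi h x = (u' * fst h + v' * snd h) / v'" for h
        unfolding psi_def x2 t_def using v'0 by (simp add: field_simps)
      have "f x + g x \<le> ereal (k' / v')"
      proof (rule sum_bound[OF Hf Hg])
        show "f x \<noteq> -\<infinity>" "g x \<noteq> -\<infinity>" using nf ng by auto
        fix p q assume "p \<in> Hf" "q \<in> Hg"
        hence "p + q \<in> msum (supp f) (supp g)" using Hfs Hgs unfolding msum_def by blast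
        hence "u' * fst (p+q) + v' * snd (p+q) \<le> k'" by (rule mk')
        hence "psi (p+q) x \<le> k' / v'" unfolding psix using v'0 by (intro divide_right_mono) auto
        then show "psi p x + psi q x \<le> k' / v'" by (simp add: psi_add)
      qed
      moreover have "ereal (psi h0 x) \<le> f x + g x" using h0S unfolding S_def supp_def by auto
      moreover have "psi h0 x > k' / v'" unfolding psix using v'0 h0k' by (simp add: divide_strict_right_mono)
      ultimately show False by (meson ereal_less_eq(3) not_le order_trans)
    qed
  qed
  have eq: "S = C" using CS SC by auto
  have "H_convex_set C" unfolding H_convex_set_def
  proof (intro allI impI)
    fix h0 assume "h0 \<notin> C"
    hence "h0 \<notin> S" using eq by auto
    then obtain x where x: "\<not> ereal (psi h0 x) \<le> f x + g x" unfolding S_def supp_def by auto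
    have "(SUP h\<in>C. ereal (psi h x)) \<le> f x + g x"
      by (rule SUP_least) (use CS in \<open>auto simp: S_def supp_def\<close>)
    then show "\<exists>x. ereal (psi h0 x) > (SUP h\<in>C. ereal (psi h x))" using x by (intro exI[of _ x]) auto
  qed
  then show ?thesis using eq unfolding C_def S_def by auto
qed

end
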